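(* Let $k=\delta n$ with $\delta = \omega(\log^{-1/3} n)$, let $G$ be a $k$-regular bipartite graph on $2n$ vertices, and let $G_1\subseteq G_2$ be as defined in the context. A.a.s. $G_1$ contains isolated vertices and $G_2$ does not. Furthermore, a.a.s. there is no pair $x,y$ of vertices that are isolated in $G_1$ with $xy\in E(G_2)$.
   Context: Set $p_1 = \frac{\log n - \log\log\log\log n}{k}$ and $p_2 = \frac{\log n + \log\log\log\log n}{k}$. For a graph $H$ and $p\in[0,1]$, $H(p)$ is the random subgraph of $H$ retaining each edge independently with probability $p$. Let $G_2\sim G(p_2)$ and $G_1\sim G_2(p_1/p_2)$. "A.a.s." means with probability tending to $1$ as $n\to\infty$. *)

theory Defs
  imports Complex_Main
begin

definition simple_graph :: "'a set \<Rightarrow> 'a set set \<Rightarrow> bool" where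
  "simple_graph V E \<longleftrightarrow> finite V \<and>
     (\<forall>e\<in>E. \<exists>x y. e = {x, y} \<and> x \<noteq> y \<and> x \<in> V \<and> y \<in> V)"

definition degree :: "'a set set \<Rightarrow> 'a \<Rightarrow> nat" where
  "degree E v = card {e\<in>E. v \<in> e}"

definition regular :: "'a set \<Rightarrow> 'a set set \<Rightarrow> nat \<Rightarrow> bool" where
  "regular V E k \<longleftrightarrow> (\<forall>v\<in>V. degree E v = k)"

definition bipartite :: "'a set \<Rightarrow> 'a set set \<Rightarrow> bool" where
  "bipartite V E \<longleftrightarrow> (\<exists>L R. L \<inter> R = {} \<and> L \<union> R = V \<and>
      (\<forall>e\<in>E. \<exists>x\<in>L. \<exists>y\<in>R. e = {x, y}))"

definition isolated :: "'a set \<Rightarrow> 'a set set \<Rightarrow> 'a \<Rightarrow> bool" where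
  "isolated V A v \<longleftrightarrow> v \<in> V \<and> (\<forall>e\<in>A. v \<notin> e)"

definition p1 :: "nat \<Rightarrow> nat \<Rightarrow> real" where
  "p1 n k = (ln (real n) - ln (ln (ln (ln (real n))))) / real k"

definition p2 :: "nat \<Rightarrow> nat \<Rightarrow> real" where
  "p2 n k = (ln (real n) + ln (ln (ln (ln (real n))))) / real k"

(* Probability of the event P(G1, G2) for the coupling G2 ~ G(q2), G1 ~ G2(q1/q2):
   each edge of E independently lies in G1 with prob. q1, in G2 \ G1 with prob. q2 - q1,
   and outside G2 with prob. 1 - q2. *)
definition coupled_prob :: "'a set set \<Rightarrow> real \<Rightarrow> real \<Rightarrow> ('a set set \<Rightarrow> 'a set set \<Rightarrow> bool) \<Rightarrow> real" where
  "coupled_prob E q1 q2 P =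
     (\<Sum>B\<in>Pow E. \<Sum>A\<in>Pow B.
        if P A B then q1 ^ card A * (q2 - q1) ^ card (B - A) * (1 - q2) ^ card (E - B) else 0)"

end

theory Submission
  imports Defs "HOL-Real_Asymp.Real_Asymp"
begin


definition Wt :: "'a set set \<Rightarrow> real \<Rightarrow> real \<Rightarrow> 'a set set \<Rightarrow> 'a set set \<Rightarrow> real" where
  "Wt E q1 q2 A B = q1 ^ card A * (q2 - q1) ^ card (B - A) * (1 - q2) ^ card (E - B)"

definition EE :: "'a set set \<Rightarrow> real \<Rightarrow> real \<Rightarrow> ('a set set \<Rightarrow> 'a set set \<Rightarrow> real) \<Rightarrow> real" where
  "EE E q1 q2 f = (\<Sum>B\<in>Pow E. \<Sum>A\<in>Pow B. Wt E q1 q2 A B * f A B)"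

lemma cp_Ex: "coupled_prob E q1 q2 P = EE E q1 q2 (\<lambda>A B. if P A B then 1 else 0)"
  unfolding coupled_prob_def EE_def Wt_def by (intro sum.cong refl) auto

lemma EE_prod:
  assumes "finite E"
  shows "EE E q1 q2 (\<lambda>A B. (\<Prod>e\<in>A. x e) * (\<Prod>e\<in>B-A. y e)) =
         (\<Prod>e\<in>E. q1 * x e + (q2 - q1) * y e + (1 - q2))"
proof -
  have "(\<Prod>e\<in>E. q1 * x e + (q2 - q1) * y e + (1 - q2)) =
        (\<Sum>B\<in>Pow E. (\<Prod>e\<in>B. q1 * x e + (q2 - q1) * y e) * (\<Prod>e\<in>E-B. (1 - q2)))"
    by (rule prod_add[OF assms])
  also have "\<dots> = (\<Sum>B\<in>Pow E. (\<Sum>A\<in>Pow B. (\<Prod>e\<in>A. q1 * x e) * (\<Prod>e\<in>B-A. (q2 - q1) * y e)) * (1 - q2) ^ card (E - B))"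
  proof (intro sum.cong refl)
    fix B assume "B \<in> Pow E"
    then have "finite B" using assms finite_subset by auto
    then show "(\<Prod>e\<in>B. q1 * x e + (q2 - q1) * y e) * (\<Prod>e\<in>E-B. (1 - q2)) =
      (\<Sum>A\<in>Pow B. (\<Prod>e\<in>A. q1 * x e) * (\<Prod>e\<in>B-A. (q2 - q1) * y e)) * (1 - q2) ^ card (E - B)"
      by (simp add: prod_add)
  qed
  also have "\<dots> = EE E q1 q2 (\<lambda>A B. (\<Prod>e\<in>A. x e) * (\<Prod>e\<in>B-A. y e))"
    unfolding EE_def Wt_def sum_distrib_right
  proof (intro sum.cong refl)
    fix B A assume "B \<in> Pow E" "A \<in> Pow B"
    then have "finite B" using assms finite_subset by auto
    then have "finite A" "finite (B - A)" using \<open>A \<in> Pow B\<close> finite_subset by auto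
    then show "(\<Prod>e\<in>A. q1 * x e) * (\<Prod>e\<in>B - A. (q2 - q1) * y e) * (1 - q2) ^ card (E - B) =
         q1 ^ card A * (q2 - q1) ^ card (B - A) * (1 - q2) ^ card (E - B) * ((\<Prod>e\<in>A. x e) * (\<Prod>e\<in>B - A. y e))"
      by (simp add: prod.distrib)
  qed
  finally show ?thesis by simp
qed

lemma EE_add: "EE E q1 q2 (\<lambda>A B. f A B + g A B) = EE E q1 q2 f + EE E q1 q2 g"
  unfolding EE_def by (simp add: distrib_left sum.distrib)

lemma EE_diff: "EE E q1 q2 (\<lambda>A B. f A B - g A B) = EE E q1 q2 f - EE E q1 q2 g"
  unfolding EE_def by (simp add: right_diff_distrib sum_subtractf)

lemma EE_cmult: "EE E q1 q2 (\<lambda>A B. c * f A B) = c * EE E q1 q2 f"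
  unfolding EE_def by (simp add: sum_distrib_left mult.left_commute)

lemma EE_sum: "EE E q1 q2 (\<lambda>A B. \<Sum>i\<in>I. f i A B) = (\<Sum>i\<in>I. EE E q1 q2 (f i))"
  unfolding EE_def by (simp add: sum_distrib_left sum.swap[of _ I])

lemma EE_cong:
  assumes "\<And>A B. A \<subseteq> B \<Longrightarrow> B \<subseteq> E \<Longrightarrow> f A B = g A B"
  shows "EE E q1 q2 f = EE E q1 q2 g"
  unfolding EE_def using assms by (intro sum.cong refl) auto

lemma Wt_nonneg: "0 \<le> q1 \<Longrightarrow> q1 \<le> q2 \<Longrightarrow> q2 \<le> 1 \<Longrightarrow> 0 \<le> Wt E q1 q2 A B"
  unfolding Wt_def by simp

lemma EE_mono:
  assumes "0 \<le> q1" "q1 \<le> q2" "q2 \<le> 1"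
    and "\<And>A B. A \<subseteq> B \<Longrightarrow> B \<subseteq> E \<Longrightarrow> f A B \<le> g A B"
  shows "EE E q1 q2 f \<le> EE E q1 q2 g"
  unfolding EE_def using assms Wt_nonneg[OF assms(1-3)]
  by (intro sum_mono mult_left_mono) auto

lemma EE_one:
  assumes "finite E"
  shows "EE E q1 q2 (\<lambda>A B. 1) = 1"
proof -
  have "EE E q1 q2 (\<lambda>A B. 1) = EE E q1 q2 (\<lambda>A B. (\<Prod>e\<in>A. 1) * (\<Prod>e\<in>B-A. 1))" by simp
  also have "\<dots> = 1" unfolding EE_prod[OF assms] by simp
  finally show ?thesis .
qed

lemma EE_const:
  assumes "finite E"
  shows "EE E q1 q2 (\<lambda>A B. c) = c"
  using EE_cmult[of E q1 q2 c "\<lambda>A B. 1"] EE_one[OF assms] by simp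

lemma prod_ind:
  assumes "finite A"
  shows "(\<Prod>e\<in>A. if e \<in> F then 0 else 1 :: real) = (if A \<inter> F = {} then 1 else 0)"
  using assms by (induction A rule: finite_induct) auto

lemma EE_event:
  assumes "finite E"
  shows "EE E q1 q2 (\<lambda>A B. if A \<inter> F = {} \<and> (B - A) \<inter> G = {} then 1 else 0) =
     (\<Prod>e\<in>E. q1 * (if e \<in> F then 0 else 1) + (q2 - q1) * (if e \<in> G then 0 else 1) + (1 - q2))"
proof -
  have "EE E q1 q2 (\<lambda>A B. if A \<inter> F = {} \<and> (B - A) \<inter> G = {} then 1 else 0) =
        EE E q1 q2 (\<lambda>A B. (\<Prod>e\<in>A. if e \<in> F then 0 else 1) * (\<Prod>e\<in>B-A. if e \<in> G then 0 else 1))"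
  proof (rule EE_cong)
    fix A B assume "A \<subseteq> B" "B \<subseteq> E"
    then have "finite A" "finite (B - A)" using assms by (meson finite_subset, meson finite_Diff finite_subset)
    then show "(if A \<inter> F = {} \<and> (B - A) \<inter> G = {} then 1 else 0) =
        (\<Prod>e\<in>A. if e \<in> F then 0 else 1) * (\<Prod>e\<in>B-A. if e \<in> G then 0 else 1 :: real)"
      by (simp add: prod_ind)
  qed
  then show ?thesis using EE_prod[OF assms] by simp
qed

lemma prod_if_const:
  assumes "finite E" "F \<subseteq> E"
  shows "(\<Prod>e\<in>E. if e \<in> F then a else 1) = (a::real) ^ card F"
proof -
  have "(\<Prod>e\<in>E. if e \<in> F then a else 1) = (\<Prod>e\<in>E \<inter> {e. e \<in> F}. a) * (\<Prod>e\<in>E \<inter> - {e. e \<in> F}. 1)"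
    by (rule prod.If_cases[OF assms(1)])
  also have "E \<inter> {e. e \<in> F} = F" using assms by auto
  finally show ?thesis by simp
qed

lemma Q_A:
  assumes "finite E" "F \<subseteq> E"
  shows "EE E q1 q2 (\<lambda>A B. if A \<inter> F = {} then 1 else 0) = (1 - q1) ^ card F"
proof -
  have "EE E q1 q2 (\<lambda>A B. if A \<inter> F = {} then 1 else 0) =
    EE E q1 q2 (\<lambda>A B. if A \<inter> F = {} \<and> (B - A) \<inter> {} = {} then 1 else 0)" by simp
  also have "\<dots> = (\<Prod>e\<in>E. if e \<in> F then 1 - q1 else 1)"
    unfolding EE_event[OF assms(1)] by (intro prod.cong refl) auto
  finally show ?thesis using prod_if_const[OF assms] by simp
qed

lemma Q_B:
  assumes "finite E" "F \<subseteq> E"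
  shows "EE E q1 q2 (\<lambda>A B. if A \<inter> F = {} \<and> (B - A) \<inter> F = {} then 1 else 0) = (1 - q2) ^ card F"
proof -
  have "EE E q1 q2 (\<lambda>A B. if A \<inter> F = {} \<and> (B - A) \<inter> F = {} then 1 else 0) = (\<Prod>e\<in>E. if e \<in> F then 1 - q2 else 1)"
    unfolding EE_event[OF assms(1)] by (intro prod.cong refl) auto
  then show ?thesis using prod_if_const[OF assms] by simp
qed

lemma Q_C:
  assumes "finite E" "F \<subseteq> E" "e0 \<in> F"
  shows "EE E q1 q2 (\<lambda>A B. if A \<inter> F = {} \<and> (B - A) \<inter> {e0} = {} then 1 else 0) =
     (1 - q2) * (1 - q1) ^ (card F - 1)"
proof -
  have "EE E q1 q2 (\<lambda>A B. if A \<inter> F = {} \<and> (B - A) \<inter> {e0} = {} then 1 else 0) =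
     (\<Prod>e\<in>E. if e \<in> F then (if e = e0 then 1 - q2 else 1 - q1) else 1)"
    unfolding EE_event[OF assms(1)] using assms by (intro prod.cong refl) auto
  also have "\<dots> = (\<Prod>e\<in>F. if e = e0 then 1 - q2 else 1 - q1)"
    using assms by (intro prod.mono_neutral_cong_right) auto
  also have "\<dots> = (1 - q2) * (\<Prod>e\<in>F - {e0}. if e = e0 then 1 - q2 else 1 - q1)"
    using assms finite_subset by (subst prod.remove[of _ e0]) auto
  also have "(\<Prod>e\<in>F - {e0}. if e = e0 then 1 - q2 else 1 - q1) = (\<Prod>e\<in>F - {e0}. 1 - q1)"
    by (intro prod.cong refl) auto
  also have "\<dots> = (1 - q1) ^ (card F - 1)" using assms finite_subset by simp
  finally show ?thesis .
qed



lemma second_moment: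
  fixes N :: "'v \<Rightarrow> 'a set set" and V :: "'v set" and q1 q2 :: real
  assumes finE: "finite E" and q: "0 \<le> q1" "q1 \<le> q2" "q2 \<le> 1" "q1 < 1"
    and finV: "finite V" and Vne: "V \<noteq> {}"
    and N: "\<And>v. v \<in> V \<Longrightarrow> N v \<subseteq> E \<and> card (N v) = k"
    and NI: "\<And>u v. u \<in> V \<Longrightarrow> v \<in> V \<Longrightarrow> u \<noteq> v \<Longrightarrow> card (N u \<inter> N v) \<le> 1"
    and k: "k \<ge> 1"
  shows "EE E q1 q2 (\<lambda>A B. if \<forall>v\<in>V. A \<inter> N v \<noteq> {} then 1 else 0)
           \<le> 1 / (card V * (1 - q1) ^ k) + q1 / (1 - q1)"
proof -
  define \<mu> where "\<mu> = card V * (1 - q1) ^ k"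
  define c where "c = (1 - q1) ^ (2 * k - 1)"
  define X where "X A = (\<Sum>v\<in>V. if A \<inter> N v = {} then 1 else 0 :: real)" for A
  have q1': "0 < 1 - q1" using q by simp
  have mupos: "\<mu> > 0" unfolding \<mu>_def using finV Vne q1' by (simp add: card_gt_0_iff)
  have EX: "EE E q1 q2 (\<lambda>A B. X A) = \<mu>"
    unfolding X_def EE_sum \<mu>_def using Q_A[OF finE] N by simp
  have X2: "X A ^ 2 = (\<Sum>u\<in>V. \<Sum>v\<in>V. if A \<inter> (N u \<union> N v) = {} then 1 else 0)" for A
    unfolding X_def power2_eq_square sum_product by (intro sum.cong refl) auto
  have term_bd: "EE E q1 q2 (\<lambda>A B. if A \<inter> (N u \<union> N v) = {} then 1 else 0) \<le> (if u = v then (1 - q1) ^ k else c)"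
    if "u \<in> V" "v \<in> V" for u v
  proof -
    have sub: "N u \<union> N v \<subseteq> E" using N that by auto
    have "EE E q1 q2 (\<lambda>A B. if A \<inter> (N u \<union> N v) = {} then 1 else 0) = (1 - q1) ^ card (N u \<union> N v)"
      by (rule Q_A[OF finE sub])
    also have "\<dots> \<le> (if u = v then (1 - q1) ^ k else c)"
    proof (cases "u = v")
      case True then show ?thesis using N[OF that(1)] by simp
    next
      case False
      have fin: "finite (N u)" "finite (N v)" using N that finE finite_subset by blast+
      have "card (N u \<union> N v) + card (N u \<inter> N v) = card (N u) + card (N v)"
        using card_Un_Int[OF fin] by simp
      then have "card (N u \<union> N v) \<ge> 2 * k - 1" using NI[OF that False] N that by simp
      then have "(1 - q1) ^ card (N u \<union> N v) \<le> c" unfolding c_def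
        using q q1' by (intro power_decreasing) auto
      then show ?thesis using False by simp
    qed
    finally show ?thesis .
  qed
  have EX2: "EE E q1 q2 (\<lambda>A B. X A ^ 2) \<le> \<mu> + card V * (card V * c)"
  proof -
    have "EE E q1 q2 (\<lambda>A B. X A ^ 2) = (\<Sum>u\<in>V. \<Sum>v\<in>V. EE E q1 q2 (\<lambda>A B. if A \<inter> (N u \<union> N v) = {} then 1 else 0))"
      unfolding X2 EE_sum by simp
    also have "\<dots> \<le> (\<Sum>u\<in>V. \<Sum>v\<in>V. (if u = v then (1 - q1) ^ k else c))"
      using term_bd by (intro sum_mono) auto
    also have "\<dots> \<le> (\<Sum>u\<in>V. (1 - q1) ^ k + card V * c)"
    proof (intro sum_mono)
      fix u assume u: "u \<in> V"
      have "(\<Sum>v\<in>V. (if u = v then (1 - q1) ^ k else c)) = (1 - q1) ^ k + (\<Sum>v\<in>V - {u}. (if u = v then (1 - q1) ^ k else c))"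
        using u finV by (subst sum.remove[of _ u]) auto
      also have "(\<Sum>v\<in>V - {u}. (if u = v then (1 - q1) ^ k else c)) = (\<Sum>v\<in>V - {u}. c)"
        by (intro sum.cong refl) auto
      also have "\<dots> = card (V - {u}) * c" by simp
      also have "\<dots> \<le> card V * c" unfolding c_def using q1' finV
        by (intro mult_right_mono) (auto simp: card_mono)
      finally show "(\<Sum>v\<in>V. (if u = v then (1 - q1) ^ k else c)) \<le> (1 - q1) ^ k + card V * c" by simp
    qed
    also have "\<dots> = \<mu> + card V * (card V * c)" unfolding \<mu>_def by (simp add: distrib_left sum.distrib)
    finally show ?thesis .
  qed
  have cmu: "card V * (card V * c) = \<mu>^2 / (1 - q1)"
  proof -
    have "(1 - q1) ^ k * (1 - q1) ^ k = c * (1 - q1)"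
      unfolding c_def using k by (simp add: power_add[symmetric] power_Suc2[symmetric] mult_2)
    note h = this
    have "\<mu>^2 = card V * card V * ((1 - q1) ^ k * (1 - q1) ^ k)" unfolding \<mu>_def
      by (simp add: power2_eq_square algebra_simps)
    also have "\<dots> = card V * (card V * c) * (1 - q1)" by (simp only: h mult.assoc of_nat_mult)
    finally show ?thesis using q1' by (simp add: field_simps)
  qed
  have "EE E q1 q2 (\<lambda>A B. if \<forall>v\<in>V. A \<inter> N v \<noteq> {} then 1 else 0) \<le>
        EE E q1 q2 (\<lambda>A B. (1 / \<mu>^2) * (X A ^ 2 - 2 * \<mu> * X A + \<mu>^2))"
  proof (rule EE_mono[OF q(1-3)])
    fix A B :: "'a set set"
    show "(if \<forall>v\<in>V. A \<inter> N v \<noteq> {} then 1 else 0) \<le> (1 / \<mu>^2) * (X A ^ 2 - 2 * \<mu> * X A + \<mu>^2)"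
    proof (cases "\<forall>v\<in>V. A \<inter> N v \<noteq> {}")
      case True
      then have "X A = 0" unfolding X_def by (intro sum.neutral) auto
      then show ?thesis using True mupos by simp
    next
      case False
      have sq: "X A ^ 2 - 2 * \<mu> * X A + \<mu>^2 = (X A - \<mu>)^2" by (simp add: power2_eq_square algebra_simps)
      have "0 \<le> (1 / \<mu>^2) * (X A - \<mu>)^2" by simp
      moreover have "(if \<forall>v\<in>V. A \<inter> N v \<noteq> {} then 1 else 0) = (0::real)" using False by simp
      ultimately show ?thesis by (simp only: sq)
    qed
  qed
  also have "\<dots> = (1 / \<mu>^2) * (EE E q1 q2 (\<lambda>A B. X A ^ 2) - 2 * \<mu> * \<mu> + \<mu>^2)"
    unfolding EE_cmult EE_add EE_diff EE_const[OF finE] EX by simp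
  also have "\<dots> \<le> (1 / \<mu>^2) * (\<mu> + \<mu>^2 / (1 - q1) - 2 * \<mu> * \<mu> + \<mu>^2)"
    using EX2 cmu mupos by (intro mult_left_mono) auto
  also have "\<dots> = 1 / \<mu> + q1 / (1 - q1)"
    using mupos q1' by (simp add: field_simps power2_eq_square)
  finally show ?thesis unfolding \<mu>_def .
qed



lemma sg_facts:
  assumes "simple_graph V E"
  shows "finite V" "finite E" "\<And>e. e \<in> E \<Longrightarrow> \<exists>x y. e = {x, y} \<and> x \<noteq> y \<and> x \<in> V \<and> y \<in> V"
proof -
  show fV: "finite V" using assms unfolding simple_graph_def by auto
  show "\<And>e. e \<in> E \<Longrightarrow> \<exists>x y. e = {x, y} \<and> x \<noteq> y \<and> x \<in> V \<and> y \<in> V"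
    using assms unfolding simple_graph_def by auto
  then have "E \<subseteq> Pow V" by blast
  then show "finite E" using fV finite_subset by blast
qed

lemma NI_le1:
  assumes "simple_graph V E" "u \<noteq> v"
  shows "card ({e\<in>E. u \<in> e} \<inter> {e\<in>E. v \<in> e}) \<le> 1"
proof -
  have "{e\<in>E. u \<in> e} \<inter> {e\<in>E. v \<in> e} \<subseteq> {{u, v}}"
  proof
    fix e assume "e \<in> {e\<in>E. u \<in> e} \<inter> {e\<in>E. v \<in> e}"
    then have "e \<in> E" "u \<in> e" "v \<in> e" by auto
    then obtain x y where "e = {x, y}" using sg_facts(3)[OF assms(1)] by blast
    then show "e \<in> {{u, v}}" using \<open>u \<in> e\<close> \<open>v \<in> e\<close> assms(2) by auto
  qed
  then have "card ({e\<in>E. u \<in> e} \<inter> {e\<in>E. v \<in> e}) \<le> card {{u, v}}"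
    by (intro card_mono) auto
  then show ?thesis by simp
qed

lemma part1_bound:
  fixes V :: "'v set" and q1 q2 :: real
  assumes sg: "simple_graph V E" and reg: "regular V E k" and k: "k \<ge> 1" and Vne: "V \<noteq> {}"
    and q: "0 \<le> q1" "q1 \<le> q2" "q2 \<le> 1" "q1 < 1"
  shows "coupled_prob E q1 q2 (\<lambda>A B. (\<exists>v. isolated V A v) \<and> \<not> (\<exists>v. isolated V B v))
    \<ge> 1 - (1 / (card V * (1 - q1) ^ k) + q1 / (1 - q1)) - card V * (1 - q2) ^ k"
proof -
  note fin = sg_facts[OF sg]
  define N where "N v = {e\<in>E. v \<in> e}" for v
  have N: "N v \<subseteq> E \<and> card (N v) = k" if "v \<in> V" for v
    using reg that unfolding N_def regular_def degree_def by auto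
  have iso: "isolated V A v \<longleftrightarrow> v \<in> V \<and> A \<inter> N v = {}" if "A \<subseteq> E" for A v
    using that unfolding isolated_def N_def by auto
  have "EE E q1 q2 (\<lambda>A B. 1 - (if \<forall>v\<in>V. A \<inter> N v \<noteq> {} then 1 else 0)
      - (\<Sum>v\<in>V. if A \<inter> N v = {} \<and> (B - A) \<inter> N v = {} then 1 else 0))
     \<le> EE E q1 q2 (\<lambda>A B. if (\<exists>v. isolated V A v) \<and> \<not> (\<exists>v. isolated V B v) then 1 else 0)"
  proof (rule EE_mono[OF q(1-3)])
    fix A B assume AB: "A \<subseteq> B" "B \<subseteq> E"
    have s0: "0 \<le> (\<Sum>v\<in>V. if A \<inter> N v = {} \<and> (B - A) \<inter> N v = {} then 1 else 0::real)"
      by (intro sum_nonneg) auto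
    show "1 - (if \<forall>v\<in>V. A \<inter> N v \<noteq> {} then 1 else 0)
      - (\<Sum>v\<in>V. if A \<inter> N v = {} \<and> (B - A) \<inter> N v = {} then 1 else 0)
      \<le> (if (\<exists>v. isolated V A v) \<and> \<not> (\<exists>v. isolated V B v) then 1 else (0::real))"
    proof (cases "(\<exists>v. isolated V A v) \<and> \<not> (\<exists>v. isolated V B v)")
      case True then show ?thesis using s0 by simp
    next
      case False
      then consider "\<forall>v\<in>V. A \<inter> N v \<noteq> {}" | v where "isolated V B v"
        using iso AB by blast
      then show ?thesis
      proof cases
        case 1 then show ?thesis using s0 by simp
      next
        case 2
        then have v: "v \<in> V" "A \<inter> N v = {} \<and> (B - A) \<inter> N v = {}"
          using iso[of B v] AB by auto
        have "1 \<le> (\<Sum>v\<in>V. if A \<inter> N v = {} \<and> (B - A) \<inter> N v = {} then 1 else 0::real)"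
          using member_le_sum[of v V "\<lambda>v. if A \<inter> N v = {} \<and> (B - A) \<inter> N v = {} then 1 else 0::real"] v fin
          by auto
        then show ?thesis using False by auto
      qed
    qed
  qed
  also have "\<dots> = coupled_prob E q1 q2 (\<lambda>A B. (\<exists>v. isolated V A v) \<and> \<not> (\<exists>v. isolated V B v))"
    by (simp add: cp_Ex)
  finally have 1: "EE E q1 q2 (\<lambda>A B. 1 - (if \<forall>v\<in>V. A \<inter> N v \<noteq> {} then 1 else 0)
      - (\<Sum>v\<in>V. if A \<inter> N v = {} \<and> (B - A) \<inter> N v = {} then 1 else 0))
     \<le> coupled_prob E q1 q2 (\<lambda>A B. (\<exists>v. isolated V A v) \<and> \<not> (\<exists>v. isolated V B v))" .
  have 2: "EE E q1 q2 (\<lambda>A B. if \<forall>v\<in>V. A \<inter> N v \<noteq> {} then 1 else 0)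
           \<le> 1 / (card V * (1 - q1) ^ k) + q1 / (1 - q1)"
    by (rule second_moment[OF fin(2) q fin(1) Vne N _ k])
       (use NI_le1[OF sg] in \<open>auto simp: N_def\<close>)
  have 3: "EE E q1 q2 (\<lambda>A B. \<Sum>v\<in>V. if A \<inter> N v = {} \<and> (B - A) \<inter> N v = {} then 1 else 0)
     = card V * (1 - q2) ^ k"
    unfolding EE_sum using Q_B[OF fin(2)] N by simp
  show ?thesis using 1 2 3 unfolding EE_diff EE_const[OF fin(2)] by linarith
qed

lemma cp_le1:
  assumes "finite E" "0 \<le> q1" "q1 \<le> q2" "q2 \<le> 1"
  shows "coupled_prob E q1 q2 P \<le> 1"
proof -
  have "coupled_prob E q1 q2 P \<le> EE E q1 q2 (\<lambda>A B. 1)"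
    unfolding cp_Ex by (rule EE_mono[OF assms(2-4)]) auto
  then show ?thesis using EE_one[OF assms(1)] by simp
qed

lemma part2_bound:
  fixes V :: "'v set" and q1 q2 :: real
  assumes sg: "simple_graph V E" and reg: "regular V E k" and k: "k \<ge> 1"
    and q: "0 \<le> q1" "q1 \<le> q2" "q2 \<le> 1"
  shows "coupled_prob E q1 q2 (\<lambda>A B. \<not> (\<exists>x y. isolated V A x \<and> isolated V A y \<and> {x, y} \<in> B))
    \<ge> 1 - card V * k * ((q2 - q1) * (1 - q1) ^ (2 * k - 2))"
proof -
  note fin = sg_facts[OF sg]
  define N where "N v = {e\<in>E. v \<in> e}" for v
  have N: "N v \<subseteq> E \<and> card (N v) = k" if "v \<in> V" for v
    using reg that unfolding N_def regular_def degree_def by auto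
  define F where "F e = {f\<in>E. f \<inter> e \<noteq> {}}" for e
  define I1 where "I1 e A B = (if A \<inter> F e = {} then 1 else 0::real)" for e and A B :: "'v set set"
  define I2 where "I2 e A B = (if A \<inter> F e = {} \<and> (B - A) \<inter> {e} = {} then 1 else 0::real)" for e and A B :: "'v set set"
  define c where "c = (q2 - q1) * (1 - q1) ^ (2 * k - 2)"
  have Fe: "e \<in> F e" "F e \<subseteq> E" "card (F e) \<ge> 2 * k - 1" if eE: "e \<in> E" for e
  proof -
    obtain x y where e: "e = {x, y}" "x \<noteq> y" "x \<in> V" "y \<in> V" using fin(3)[OF eE] by blast
    show "e \<in> F e" "F e \<subseteq> E" using eE e unfolding F_def by auto
    have "F e = N x \<union> N y" unfolding F_def N_def e by auto
    moreover have "finite (N x)" "finite (N y)" unfolding N_def using fin(2) by auto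
    then have "card (N x \<union> N y) + card (N x \<inter> N y) = card (N x) + card (N y)"
      using card_Un_Int[of "N x" "N y"] by simp
    moreover have "card (N x \<inter> N y) \<le> 1" unfolding N_def using NI_le1[OF sg e(2)] .
    ultimately show "card (F e) \<ge> 2 * k - 1" using N e by simp
  qed
  have pe: "EE E q1 q2 (\<lambda>A B. I1 e A B - I2 e A B) \<le> c" if "e \<in> E" for e
  proof -
    define m where "m = card (F e)"
    have m: "m \<ge> 2 * k - 1" "m \<ge> 1" using Fe[OF that] k unfolding m_def by auto
    have "EE E q1 q2 (\<lambda>A B. I1 e A B - I2 e A B) = (1 - q1) ^ m - (1 - q2) * (1 - q1) ^ (m - 1)"
      unfolding EE_diff I1_def I2_def m_def
      using Q_A[OF fin(2) Fe(2)[OF that]] Q_C[OF fin(2) Fe(2)[OF that] Fe(1)[OF that]] by simp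
    also have "(1 - q1) ^ m = (1 - q1) * (1 - q1) ^ (m - 1)"
    proof -
      have "m = Suc (m - 1)" using m by simp
      then show ?thesis by (metis power_Suc)
    qed
    also have "(1 - q1) * (1 - q1) ^ (m - 1) - (1 - q2) * (1 - q1) ^ (m - 1) = (q2 - q1) * (1 - q1) ^ (m - 1)"
      by (simp add: algebra_simps)
    also have "\<dots> \<le> c" unfolding c_def using q m
      by (intro mult_left_mono power_decreasing) auto
    finally show ?thesis .
  qed
  have "EE E q1 q2 (\<lambda>A B. 1 - (\<Sum>e\<in>E. I1 e A B - I2 e A B))
     \<le> EE E q1 q2 (\<lambda>A B. if \<not> (\<exists>x y. isolated V A x \<and> isolated V A y \<and> {x, y} \<in> B) then 1 else 0)"
  proof (rule EE_mono[OF q(1-3)])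
    fix A B assume AB: "A \<subseteq> B" "B \<subseteq> E"
    have nn: "0 \<le> I1 e A B - I2 e A B" for e unfolding I1_def I2_def by auto
    have s0: "0 \<le> (\<Sum>e\<in>E. I1 e A B - I2 e A B)" by (intro sum_nonneg nn)
    show "1 - (\<Sum>e\<in>E. I1 e A B - I2 e A B)
      \<le> (if \<not> (\<exists>x y. isolated V A x \<and> isolated V A y \<and> {x, y} \<in> B) then 1 else (0::real))"
    proof (cases "\<exists>x y. isolated V A x \<and> isolated V A y \<and> {x, y} \<in> B")
      case False then show ?thesis using s0 by simp
    next
      case True
      then obtain x y where xy: "isolated V A x" "isolated V A y" "{x, y} \<in> B" by blast
      define e where "e = {x, y}"
      have eE: "e \<in> E" using xy AB e_def by auto
      have "A \<inter> F e = {}" using xy unfolding F_def e_def isolated_def by auto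
      moreover have "e \<in> B - A" using xy unfolding e_def isolated_def by auto
      ultimately have "I1 e A B - I2 e A B = 1" unfolding I1_def I2_def by auto
      then have "1 \<le> (\<Sum>e\<in>E. I1 e A B - I2 e A B)"
        using member_le_sum[of e E "\<lambda>e. I1 e A B - I2 e A B"] eE fin nn by auto
      then show ?thesis using True by simp
    qed
  qed
  then have 1: "1 - (\<Sum>e\<in>E. EE E q1 q2 (\<lambda>A B. I1 e A B - I2 e A B))
     \<le> coupled_prob E q1 q2 (\<lambda>A B. \<not> (\<exists>x y. isolated V A x \<and> isolated V A y \<and> {x, y} \<in> B))"
    unfolding cp_Ex EE_diff[of E q1 q2 "\<lambda>A B. 1"] EE_const[OF fin(2)] EE_sum by simp
  have "(\<Sum>e\<in>E. EE E q1 q2 (\<lambda>A B. I1 e A B - I2 e A B)) \<le> (\<Sum>e\<in>E. c)"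
    by (intro sum_mono pe)
  also have "\<dots> = card E * c" by simp
  also have "\<dots> \<le> card V * k * c"
  proof -
    have "E \<subseteq> (\<Union>v\<in>V. N v)"
    proof
      fix e assume eE: "e \<in> E"
      then obtain x y where "e = {x, y}" "x \<in> V" using fin(3) by blast
      then show "e \<in> (\<Union>v\<in>V. N v)" unfolding N_def using eE by blast
    qed
    then have "card E \<le> card (\<Union>v\<in>V. N v)"
      using fin(1) fin(2) unfolding N_def by (intro card_mono) auto
    also have "\<dots> \<le> (\<Sum>v\<in>V. card (N v))" by (rule card_UN_le[OF fin(1)])
    also have "\<dots> = card V * k" using N by simp
    finally have "card E \<le> card V * k" .
    moreover have "0 \<le> c" unfolding c_def using q by simp
    moreover have "real (card E) \<le> real (card V) * real k" using \<open>card E \<le> card V * k\<close>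
      by (metis of_nat_le_iff of_nat_mult)
    ultimately show ?thesis using mult_right_mono[of "real (card E)" "real (card V) * real k" c] by simp
  qed
  finally show ?thesis using 1 unfolding c_def by linarith
qed



lemma pow_exp_le:
  fixes q :: real assumes "q \<le> 1"
  shows "(1 - q) ^ k \<le> exp (- (q * k))"
proof -
  have "(1 - q) ^ k \<le> exp (- q) ^ k"
    using assms exp_ge_add_one_self[of "-q"] by (intro power_mono) auto
  also have "\<dots> = exp (- (q * k))" using exp_of_nat_mult[of k "-q"] by (simp add: mult.commute)
  finally show ?thesis .
qed

lemma pow_exp_ge:
  fixes q :: real assumes "0 \<le> q" "q \<le> 1/2"
  shows "exp (- (q * k) - 2 * q^2 * k) \<le> (1 - q) ^ k"
proof -
  have "exp (- (q * k) - 2 * q^2 * k) = exp (- q - 2 * q^2) ^ k"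
    using exp_of_nat_mult[of k "- q - 2 * q^2"] by (simp add: algebra_simps)
  also have "\<dots> \<le> exp (ln (1 - q)) ^ k"
    using ln_one_minus_pos_lower_bound[OF assms] by (intro power_mono) auto
  also have "\<dots> = (1 - q) ^ k" using assms by simp
  finally show ?thesis .
qed

lemma key_bounds:
  fixes n k :: nat
  assumes L2: "ln (real n) \<ge> 2" and l3: "ln (ln (ln (real n))) > 1"
    and l4le: "ln (ln (ln (ln (real n)))) \<le> ln (real n)"
    and kbig: "real k \<ge> ln (real n) ^ 3"
  shows "k \<ge> 1" "0 \<le> p1 n k" "p1 n k \<le> p2 n k" "p2 n k \<le> 1" "p1 n k < 1"
    "p1 n k / (1 - p1 n k) \<le> 2 / ln (real n) ^ 2"
    "real (2 * n) * (1 - p2 n k) ^ k \<le> 2 / ln (ln (ln (real n)))"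
    "1 / (real (2 * n) * (1 - p1 n k) ^ k) \<le> 2 / ln (ln (ln (real n)))"
    "real (2 * n) * k * ((p2 n k - p1 n k) * (1 - p1 n k) ^ (2 * k - 2))
       \<le> 16 * ln (ln (ln (ln (real n)))) * ln (ln (ln (real n))) ^ 2 / real n"
proof -
  define L where "L = ln (real n)"
  define t where "t = ln (ln (ln (real n)))"
  define a where "a = ln t"
  define K where "K = real k"
  have L2': "L \<ge> 2" using L2 L_def by simp
  have apos: "a > 0" unfolding a_def using l3 t_def by simp
  have aL: "a \<le> L" unfolding a_def t_def L_def using l4le .
  have npos: "real n > 0" using L2 by (cases "n = 0") auto
  have expL: "exp L = real n" unfolding L_def using npos by simp
  have tpos: "t > 0" using l3 t_def by simp
  have expa: "exp a = t" unfolding a_def using tpos by simp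
  have L3: "L ^ 3 \<ge> 8" using L2' power_mono[of 2 L 3] by simp
  have KL: "K \<ge> L ^ 3" unfolding K_def L_def using kbig .
  have Kpos: "K > 0" using KL L3 by simp
  then show "k \<ge> 1" unfolding K_def by simp
  have p1: "p1 n k = (L - a) / K" unfolding p1_def L_def a_def t_def K_def by simp
  have p2: "p2 n k = (L + a) / K" unfolding p2_def L_def a_def t_def K_def by simp
  have LK: "L / K \<le> 1 / L ^ 2"
  proof -
    have "L / K \<le> L / L ^ 3" using KL L3 L2' by (intro divide_left_mono) auto
    also have "\<dots> = 1 / L ^ 2" using L2' by (simp add: power3_eq_cube power2_eq_square)
    finally show ?thesis .
  qed
  have L2inv: "1 / L ^ 2 \<le> 1 / 4" using L2' power_mono[of 2 L 2] by (simp add: divide_simps)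
  show p1nn: "0 \<le> p1 n k" unfolding p1 using aL Kpos by simp
  show "p1 n k \<le> p2 n k" unfolding p1 p2 using apos Kpos by (simp add: divide_right_mono)
  have p2le: "p2 n k \<le> 2 / L ^ 2"
  proof -
    have "p2 n k \<le> (2 * L) / K" unfolding p2 using aL Kpos by (simp add: divide_right_mono)
    also have "\<dots> = 2 * (L / K)" by simp
    also have "\<dots> \<le> 2 / L ^ 2" using LK by simp
    finally show ?thesis .
  qed
  then show "p2 n k \<le> 1" using L2inv by simp
  have p1le: "p1 n k \<le> 1 / L ^ 2"
  proof -
    have "p1 n k \<le> L / K" unfolding p1 using apos Kpos by (simp add: divide_right_mono)
    then show ?thesis using LK by simp
  qed
  have p1half: "p1 n k \<le> 1/2" using p1le L2inv by simp
  then show "p1 n k < 1" by simp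
  show "p1 n k / (1 - p1 n k) \<le> 2 / ln (real n) ^ 2"
  proof -
    have h: "0 \<le> p1 n k * (1 - 2 * p1 n k)" using p1half p1nn by simp
    have "p1 n k \<le> 2 * p1 n k * (1 - p1 n k)" using h by (simp add: algebra_simps)
    then have "p1 n k / (1 - p1 n k) \<le> 2 * p1 n k" using p1half by (simp add: divide_simps)
    then show ?thesis using p1le L_def by simp
  qed
  have p1K: "p1 n k * k = L - a" unfolding p1 K_def[symmetric] using Kpos by simp
  have p2K: "p2 n k * k = L + a" unfolding p2 K_def[symmetric] using Kpos by simp
  show "real (2 * n) * (1 - p2 n k) ^ k \<le> 2 / ln (ln (ln (real n)))"
  proof -
    have "(1 - p2 n k) ^ k \<le> exp (- (L + a))"
      using pow_exp_le[of "p2 n k" k] p2K \<open>p2 n k \<le> 1\<close> by simp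
    also have "\<dots> = 1 / (real n * t)"
    proof -
      have "exp (- (L + a)) * (exp L * exp a) = 1" by (simp add: exp_add[symmetric])
      then show ?thesis using expL expa npos tpos by (simp add: field_simps)
    qed
    finally have "real (2 * n) * (1 - p2 n k) ^ k \<le> real (2 * n) * (1 / (real n * t))"
      using npos by (intro mult_left_mono) auto
    also have "\<dots> = 2 / t" using npos by simp
    finally show ?thesis unfolding t_def .
  qed
  show "1 / (real (2 * n) * (1 - p1 n k) ^ k) \<le> 2 / ln (ln (ln (real n)))"
  proof -
    have "p1 n k ^ 2 * k = p1 n k * (L - a)" using p1K by (simp add: power2_eq_square)
    also have "\<dots> \<le> (1 / L ^ 2) * L" using p1le aL apos p1nn L2' by (intro mult_mono) auto
    also have "\<dots> = 1 / L" using L2' by (simp add: power2_eq_square)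
    also have "\<dots> \<le> 1 / 2" using L2' by simp
    finally have sq: "p1 n k ^ 2 * k \<le> 1 / 2" .
    have "exp (- L + a - 1) \<le> exp (- (p1 n k * k) - 2 * p1 n k ^ 2 * k)"
      using p1K sq by simp
    also have "\<dots> \<le> (1 - p1 n k) ^ k" by (rule pow_exp_ge[OF p1nn p1half])
    finally have lo: "exp (- L + a - 1) \<le> (1 - p1 n k) ^ k" .
    have "exp (- L + a - 1) = t / (real n * exp 1)"
    proof -
      have "exp (- L + a - 1) * (exp L * exp 1) = exp a" by (simp add: exp_add[symmetric])
      then show ?thesis using expL expa npos tpos by (simp add: field_simps)
    qed
    then have "t / (real n * exp 1) \<le> (1 - p1 n k) ^ k" using lo by simp
    then have "t \<le> (1 - p1 n k) ^ k * (real n * exp 1)" using npos by (simp add: divide_le_eq)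
    then have "t \<le> exp 1 * (real n * (1 - p1 n k) ^ k)" by (simp add: algebra_simps)
    then have "t / exp 1 \<le> real n * (1 - p1 n k) ^ k" by (simp add: divide_le_eq mult.commute)
    then have "2 * t / exp 1 \<le> real (2 * n) * (1 - p1 n k) ^ k" by simp
    then have "1 / (real (2 * n) * (1 - p1 n k) ^ k) \<le> 1 / (2 * t / exp 1)"
      using tpos npos p1half by (intro divide_left_mono mult_pos_pos) auto
    also have "\<dots> = exp 1 / (2 * t)" by simp
    also have "\<dots> \<le> 4 / (2 * t)" using exp_le tpos by (intro divide_right_mono) auto
    finally show ?thesis unfolding t_def by simp
  qed
  show "real (2 * n) * k * ((p2 n k - p1 n k) * (1 - p1 n k) ^ (2 * k - 2))
       \<le> 16 * ln (ln (ln (ln (real n)))) * ln (ln (ln (real n))) ^ 2 / real n"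
  proof -
    have d: "(p2 n k - p1 n k) * k = 2 * a" using p1K p2K by (simp add: algebra_simps)
    have "(1 - p1 n k) ^ (2 * k) \<le> exp (- (p1 n k * real (2 * k)))"
      using pow_exp_le[of "p1 n k" "2 * k"] p1half by simp
    also have "\<dots> = exp (- L + a) ^ 2"
    proof -
      have "- (p1 n k * real (2 * k)) = real 2 * (- L + a)" using p1K by (simp add: algebra_simps)
      then show ?thesis using exp_of_nat_mult[of 2 "- L + a"] by simp
    qed
    also have "\<dots> = (t / real n) ^ 2"
    proof -
      have "exp (- L + a) * exp L = exp a" by (simp add: exp_add[symmetric])
      then have "exp (- L + a) = t / real n" using expL expa npos by (simp add: field_simps)
      then show ?thesis by simp
    qed
    finally have e2: "(1 - p1 n k) ^ (2 * k) \<le> (t / real n) ^ 2" .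
    have "(1 - p1 n k) ^ (2 * k) = (1 - p1 n k) ^ (2 * k - 2) * (1 - p1 n k) ^ 2"
    proof -
      have "2 * k = (2 * k - 2) + 2" using \<open>k \<ge> 1\<close> by simp
      then show ?thesis by (metis power_add)
    qed
    moreover have q4: "(1 - p1 n k) ^ 2 \<ge> 1 / 4"
      using p1half power_mono[of "1/2" "1 - p1 n k" 2] by (simp add: power2_eq_square)
    moreover have nn: "0 \<le> (1 - p1 n k) ^ (2 * k - 2)" using p1half by simp
    ultimately have "(1 - p1 n k) ^ (2 * k - 2) * (1 / 4) \<le> (t / real n) ^ 2"
      using e2 mult_left_mono[OF q4 nn] by linarith
    then have e3: "(1 - p1 n k) ^ (2 * k - 2) \<le> 4 * (t / real n) ^ 2" by simp
    have "real (2 * n) * k * ((p2 n k - p1 n k) * (1 - p1 n k) ^ (2 * k - 2))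
        = real (2 * n) * ((p2 n k - p1 n k) * k) * (1 - p1 n k) ^ (2 * k - 2)" by (simp only: mult_ac)
    also have "\<dots> = real (2 * n) * (2 * a) * (1 - p1 n k) ^ (2 * k - 2)" by (simp only: d)
    also have "\<dots> \<le> real (2 * n) * (2 * a) * (4 * (t / real n) ^ 2)"
      using e3 apos by (intro mult_left_mono) auto
    also have "\<dots> = 16 * a * t ^ 2 / real n" using npos by (simp add: power2_eq_square field_simps)
    finally show ?thesis unfolding a_def t_def .
  qed
qed



lemma ev_facts: "eventually (\<lambda>n::nat. ln (real n) \<ge> 2 \<and> ln (ln (ln (real n))) > 1 \<and>
    ln (ln (ln (ln (real n)))) \<le> ln (real n) \<and> real n / ln (real n) powr (1/3) \<ge> ln (real n) ^ 3) sequentially"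
proof -
  have 1: "eventually (\<lambda>n::nat. ln (real n) \<ge> 2) sequentially" by real_asymp
  have 2: "eventually (\<lambda>n::nat. ln (ln (ln (real n))) > 1) sequentially" by real_asymp
  have 3: "eventually (\<lambda>n::nat. ln (ln (ln (ln (real n)))) \<le> ln (real n)) sequentially" by real_asymp
  have 4: "eventually (\<lambda>n::nat. real n / ln (real n) powr (1/3) \<ge> ln (real n) ^ 3) sequentially" by real_asymp
  show ?thesis using 1 2 3 4 by eventually_elim auto
qed

lemma lim1: "(\<lambda>n::nat. 1 - (2 / ln (ln (ln (real n))) + 2 / ln (real n) ^ 2 + 2 / ln (ln (ln (real n)))))
   \<longlonglongrightarrow> 1" by real_asymp

lemma lim2: "(\<lambda>n::nat. 1 - 16 * ln (ln (ln (ln (real n)))) * ln (ln (ln (real n))) ^ 2 / real n)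
   \<longlonglongrightarrow> 1" by real_asymp



theorem claim3p2:
  fixes G :: "nat \<Rightarrow> nat set set" and k :: "nat \<Rightarrow> nat"
  assumes graphs: "\<forall>n. simple_graph {..<2*n} (G n) \<and> bipartite {..<2*n} (G n)
                        \<and> regular {..<2*n} (G n) (k n)"
    and delta: "filterlim (\<lambda>n. (real (k n) / real n) * ln (real n) powr (1/3)) at_top sequentially"
  shows "((\<lambda>n. coupled_prob (G n) (p1 n (k n)) (p2 n (k n))
            (\<lambda>A B. (\<exists>v. isolated {..<2*n} A v) \<and> \<not> (\<exists>v. isolated {..<2*n} B v)))
           \<longlonglongrightarrow> 1) \<and>
         ((\<lambda>n. coupled_prob (G n) (p1 n (k n)) (p2 n (k n))
            (\<lambda>A B. \<not> (\<exists>x y. isolated {..<2*n} A x \<and> isolated {..<2*n} A y \<and> {x, y} \<in> B)))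
           \<longlonglongrightarrow> 1)"
proof -
  define P1 where "P1 n = coupled_prob (G n) (p1 n (k n)) (p2 n (k n))
            (\<lambda>A B. (\<exists>v. isolated {..<2*n} A v) \<and> \<not> (\<exists>v. isolated {..<2*n} B v))" for n
  define P2 where "P2 n = coupled_prob (G n) (p1 n (k n)) (p2 n (k n))
            (\<lambda>A B. \<not> (\<exists>x y. isolated {..<2*n} A x \<and> isolated {..<2*n} A y \<and> {x, y} \<in> B))" for n
  have D: "eventually (\<lambda>n. 1 \<le> (real (k n) / real n) * ln (real n) powr (1/3)) sequentially"
    using delta unfolding filterlim_at_top by blast
  have good: "eventually (\<lambda>n.
      1 - (2 / ln (ln (ln (real n))) + 2 / ln (real n) ^ 2 + 2 / ln (ln (ln (real n)))) \<le> P1 n \<and> P1 n \<le> 1 \<and>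
      1 - 16 * ln (ln (ln (ln (real n)))) * ln (ln (ln (real n))) ^ 2 / real n \<le> P2 n \<and> P2 n \<le> 1) sequentially"
    using D ev_facts
  proof eventually_elim
    case (elim n)
    define q1 where "q1 = p1 n (k n)"
    define q2 where "q2 = p2 n (k n)"
    have L2: "ln (real n) \<ge> 2" using elim by simp
    have npos: "real n > 0" using L2 by (cases "n = 0") auto
    have Lp: "ln (real n) powr (1/3) > 0" using L2 by simp
    have "real n / ln (real n) powr (1/3) \<le> real (k n)"
      using elim(1) npos Lp by (simp add: divide_simps mult.commute)
    then have kbig: "real (k n) \<ge> ln (real n) ^ 3" using elim by linarith
    have l3: "ln (ln (ln (real n))) > 1" and l4: "ln (ln (ln (ln (real n)))) \<le> ln (real n)" using elim by auto
    note kb = key_bounds[of n "k n", OF L2 l3 l4 kbig, folded q1_def q2_def]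
    have sg: "simple_graph {..<2*n} (G n)" and reg: "regular {..<2*n} (G n) (k n)" using graphs by auto
    have "0 \<in> {..<2*n}" using npos by simp
    then have Vne: "{..<2*n} \<noteq> {}" by blast
    have finE: "finite (G n)" using sg_facts(2)[OF sg] .
    note pb1 = part1_bound[OF sg reg kb(1) Vne kb(2-5)]
    note pb2 = part2_bound[OF sg reg kb(1) kb(2-4)]
    have c1: "P1 n \<le> 1" unfolding P1_def using cp_le1[OF finE kb(2-4)] by (simp add: q1_def q2_def)
    have c2: "P2 n \<le> 1" unfolding P2_def using cp_le1[OF finE kb(2-4)] by (simp add: q1_def q2_def)
    have c3: "1 - (2 / ln (ln (ln (real n))) + 2 / ln (real n) ^ 2 + 2 / ln (ln (ln (real n)))) \<le> P1 n"
      using pb1 kb(6-8) unfolding P1_def q1_def q2_def by simp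
    have c4: "1 - 16 * ln (ln (ln (ln (real n)))) * ln (ln (ln (real n))) ^ 2 / real n \<le> P2 n"
      using pb2 kb(9) unfolding P2_def q1_def q2_def by simp
    show ?case using c1 c2 c3 c4 by blast
  qed
  have t1: "P1 \<longlonglongrightarrow> 1"
    by (rule tendsto_sandwich[OF _ _ lim1 tendsto_const]) (use good in \<open>eventually_elim, auto\<close>)+
  have t2: "P2 \<longlonglongrightarrow> 1"
    by (rule tendsto_sandwich[OF _ _ lim2 tendsto_const]) (use good in \<open>eventually_elim, auto\<close>)+
  show ?thesis using t1 t2 unfolding P1_def P2_def by blast
qed


end
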